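(* An orthogonal projection need not satisfy the property $\mathcal{AN}^*$: there exist a complex Hilbert space $H$ (e.g. $H = \ell^2$) and an orthogonal projection $P \in \mathcal{L}(H)$ that does not satisfy the property $\mathcal{AN}^*$.
   Context: $\mathcal{L}(H)$ is the space of bounded linear operators on $H$. For a closed subspace $M \neq \{0\}$ of $H$ and $T \in \mathcal{L}(H)$, write $[T|_M] := \inf\{\|Tx\| : x \in M, \|x\|=1\}$; $T|_M$ satisfies the property $\mathcal{N}^*$ if there exists $x_0 \in M$ with $\|x_0\| = 1$ and $\|Tx_0\| = [T|_M]$. $T$ satisfies the property $\mathcal{AN}^*$ if for every closed subspace $M \neq \{0\}$ of $H$, $T|_M$ satisfies $\mathcal{N}^*$. *)

theory Defs
  imports "HOL-Analysis.Analysis"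
begin

definition l2 :: "(nat \<Rightarrow> complex) set" where
  "l2 = {x. summable (\<lambda>n. (cmod (x n))\<^sup>2)}"

definition l2_norm :: "(nat \<Rightarrow> complex) \<Rightarrow> real" where
  "l2_norm x = sqrt (\<Sum>n. (cmod (x n))\<^sup>2)"

definition l2_inner :: "(nat \<Rightarrow> complex) \<Rightarrow> (nat \<Rightarrow> complex) \<Rightarrow> complex" where
  "l2_inner x y = (\<Sum>n. x n * cnj (y n))"

definition bounded_op :: "((nat \<Rightarrow> complex) \<Rightarrow> (nat \<Rightarrow> complex)) \<Rightarrow> bool" where
  "bounded_op T \<longleftrightarrow>
     (\<forall>x\<in>l2. T x \<in> l2) \<and>
     (\<forall>x\<in>l2. \<forall>y\<in>l2. \<forall>a::complex. T (\<lambda>n. a * x n + y n) = (\<lambda>n. a * T x n + T y n)) \<and>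
     (\<exists>C. \<forall>x\<in>l2. l2_norm (T x) \<le> C * l2_norm x)"

definition orth_proj :: "((nat \<Rightarrow> complex) \<Rightarrow> (nat \<Rightarrow> complex)) \<Rightarrow> bool" where
  "orth_proj P \<longleftrightarrow> bounded_op P \<and>
     (\<forall>x\<in>l2. P (P x) = P x) \<and>
     (\<forall>x\<in>l2. \<forall>y\<in>l2. l2_inner (P x) y = l2_inner x (P y))"

definition closed_subspace :: "(nat \<Rightarrow> complex) set \<Rightarrow> bool" where
  "closed_subspace M \<longleftrightarrow> M \<subseteq> l2 \<and> (\<lambda>n. 0) \<in> M \<and>
     (\<forall>x\<in>M. \<forall>y\<in>M. \<forall>a::complex. (\<lambda>n. a * x n + y n) \<in> M) \<and>
     (\<forall>s x. (\<forall>k. s k \<in> M) \<and> x \<in> l2 \<and>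
            ((\<lambda>k. l2_norm (\<lambda>n. s k n - x n)) \<longlonglongrightarrow> 0) \<longrightarrow> x \<in> M)"

definition restr_inf :: "((nat \<Rightarrow> complex) \<Rightarrow> (nat \<Rightarrow> complex)) \<Rightarrow> (nat \<Rightarrow> complex) set \<Rightarrow> real" where
  "restr_inf T M = Inf {l2_norm (T x) | x. x \<in> M \<and> l2_norm x = 1}"

definition N_star :: "((nat \<Rightarrow> complex) \<Rightarrow> (nat \<Rightarrow> complex)) \<Rightarrow> (nat \<Rightarrow> complex) set \<Rightarrow> bool" where
  "N_star T M \<longleftrightarrow> (\<exists>x0\<in>M. l2_norm x0 = 1 \<and> l2_norm (T x0) = restr_inf T M)"

definition AN_star :: "((nat \<Rightarrow> complex) \<Rightarrow> (nat \<Rightarrow> complex)) \<Rightarrow> bool" where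
  "AN_star T \<longleftrightarrow> (\<forall>M. closed_subspace M \<and> M \<noteq> {\<lambda>n. 0} \<longrightarrow> N_star T M)"

end

theory Submission
  imports Defs
begin

definition PP :: "(nat \<Rightarrow> complex) \<Rightarrow> (nat \<Rightarrow> complex)" where
  "PP x = (\<lambda>n. if odd n then x n else 0)"

definition MM :: "(nat \<Rightarrow> complex) set" where
  "MM = {x. x \<in> l2 \<and> (\<forall>j. x (2*j+1) = x (2*j) / of_nat (j+1))}"

lemma sq_ineq: "(cmod (a*x + y))\<^sup>2 \<le> 2 * (cmod a)\<^sup>2 * (cmod x)\<^sup>2 + 2 * (cmod y)\<^sup>2"
proof -
  have "cmod (a*x+y) \<le> cmod a * cmod x + cmod y"
    by (metis norm_mult norm_triangle_ineq)
  hence "(cmod (a*x+y))\<^sup>2 \<le> (cmod a * cmod x + cmod y)\<^sup>2"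
    by (simp add: power_mono)
  also have "\<dots> \<le> 2 * (cmod a)\<^sup>2 * (cmod x)\<^sup>2 + 2 * (cmod y)\<^sup>2"
  proof -
    have h: "0 \<le> (cmod a * cmod x - cmod y)\<^sup>2" by simp
    thus ?thesis by (simp add: power2_eq_square algebra_simps)
  qed
  finally show ?thesis .
qed

lemma l2_lin: assumes "x \<in> l2" "y \<in> l2" shows "(\<lambda>n. a * x n + y n) \<in> l2"
proof -
  have sx: "summable (\<lambda>n. (cmod (x n))\<^sup>2)" and sy: "summable (\<lambda>n. (cmod (y n))\<^sup>2)"
    using assms by (auto simp: l2_def)
  have sg: "summable (\<lambda>n. 2 * (cmod a)\<^sup>2 * (cmod (x n))\<^sup>2 + 2 * (cmod (y n))\<^sup>2)"
    using sx sy by (intro summable_add summable_mult) auto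
  thus ?thesis unfolding l2_def
    by (intro CollectI summable_comparison_test[OF _ sg]) (auto intro!: exI[of _ 0] sq_ineq)
qed

lemma l2_diff: assumes "x \<in> l2" "y \<in> l2" shows "(\<lambda>n. x n - y n) \<in> l2"
  using l2_lin[OF assms(2,1), of "-1"] by simp

lemma coord_le: assumes "y \<in> l2" shows "cmod (y n) \<le> l2_norm y"
proof -
  have s: "summable (\<lambda>n. (cmod (y n))\<^sup>2)" using assms by (simp add: l2_def)
  have "(\<Sum>i\<in>{n}. (cmod (y i))\<^sup>2) \<le> (\<Sum>i. (cmod (y i))\<^sup>2)"
    by (rule sum_le_suminf[OF s]) auto
  thus ?thesis unfolding l2_norm_def by (simp add: real_le_rsqrt)
qed

lemma PP_l2: assumes "x \<in> l2" shows "PP x \<in> l2" and "l2_norm (PP x) \<le> l2_norm x"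
proof -
  have s: "summable (\<lambda>n. (cmod (x n))\<^sup>2)" using assms by (simp add: l2_def)
  have le: "(cmod (PP x n))\<^sup>2 \<le> (cmod (x n))\<^sup>2" for n by (cases "odd n") (simp_all add: PP_def)
  have le2: "cmod (PP x n) \<le> cmod (x n)" for n by (cases "odd n") (simp_all add: PP_def)
  have s2: "summable (\<lambda>n. (cmod (PP x n))\<^sup>2)"
    by (rule summable_comparison_test[OF _ s]) (auto intro!: exI[of _ 0] le le2)
  thus "PP x \<in> l2" by (simp add: l2_def)
  show "l2_norm (PP x) \<le> l2_norm x" unfolding l2_norm_def
    by (intro real_sqrt_le_mono suminf_le s s2 le)
qed

lemma orth: "orth_proj PP"
  unfolding orth_proj_def bounded_op_def
proof (intro conjI ballI allI exI)
  fix x assume "x \<in> l2" thus "PP x \<in> l2" by (rule PP_l2)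
next
  fix x y a show "PP (\<lambda>n. a * x n + y n) = (\<lambda>n. a * PP x n + PP y n)"
    by (auto simp: PP_def)
next
  fix x assume "x \<in> l2" thus "l2_norm (PP x) \<le> 1 * l2_norm x" using PP_l2 by simp
next
  fix x show "PP (PP x) = PP x" by (auto simp: PP_def)
next
  fix x y show "l2_inner (PP x) y = l2_inner x (PP y)"
    unfolding l2_inner_def PP_def by (rule arg_cong[where f=suminf]) auto
qed


lemma l2_norm_nonneg: "x \<in> l2 \<Longrightarrow> 0 \<le> l2_norm x"
  unfolding l2_norm_def l2_def by (auto intro!: suminf_nonneg)

lemma MM_closed: "closed_subspace MM"
  unfolding closed_subspace_def
proof (intro conjI ballI allI impI)
  show "MM \<subseteq> l2" by (auto simp: MM_def)
  show "(\<lambda>n. 0) \<in> MM" by (auto simp: MM_def l2_def)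
next
  fix x y a assume "x \<in> MM" "y \<in> MM"
  thus "(\<lambda>n. a * x n + y n) \<in> MM"
    by (auto simp: MM_def l2_lin add_divide_distrib)
next
  fix s x assume H: "(\<forall>k. s k \<in> MM) \<and> x \<in> l2 \<and> (\<lambda>k. l2_norm (\<lambda>n. s k n - x n)) \<longlonglongrightarrow> 0"
  have sl2: "s k \<in> l2" for k using H by (auto simp: MM_def)
  have conv: "(\<lambda>k. s k n) \<longlonglongrightarrow> x n" for n
  proof -
    have "(\<lambda>k. s k n - x n) \<longlonglongrightarrow> 0"
    proof (rule Lim_null_comparison[OF _ conjunct2[OF conjunct2[OF H]]])
      show "\<forall>\<^sub>F k in sequentially. norm (s k n - x n) \<le> l2_norm (\<lambda>n. s k n - x n)"
        using coord_le[OF l2_diff[OF sl2 conjunct1[OF conjunct2[OF H]]]] by auto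
    qed
    from tendsto_add[OF this tendsto_const[of "x n"]] show ?thesis by simp
  qed
  show "x \<in> MM" unfolding MM_def
  proof (intro CollectI conjI allI)
    show "x \<in> l2" using H by simp
    fix j
    have e: "s k (2*j+1) = s k (2*j) / of_nat (j+1)" for k using H by (auto simp: MM_def)
    have "(\<lambda>k. s k (2*j) / of_nat (j+1)) \<longlonglongrightarrow> x (2*j) / of_nat (j+1)"
    proof -
      have nz: "(of_nat (j+1)::complex) \<noteq> 0" by (simp only: of_nat_eq_0_iff)
      show ?thesis by (intro tendsto_divide conv tendsto_const nz)
    qed
    moreover have "(\<lambda>k. s k (2*j+1)) = (\<lambda>k. s k (2*j) / of_nat (j+1))" by (intro ext e)
    ultimately have "(\<lambda>k. s k (2*j+1)) \<longlonglongrightarrow> x (2*j) / of_nat (j+1)" by simp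
    thus "x (2*j+1) = x (2*j) / of_nat (j+1)" using conv LIMSEQ_unique by blast
  qed
qed

definition vec2 :: "nat \<Rightarrow> complex \<Rightarrow> complex \<Rightarrow> nat \<Rightarrow> complex" where
  "vec2 k u v = (\<lambda>n. if n = 2*k then u else if n = 2*k+1 then v else 0)"

lemma vec2_sum: "(\<Sum>n. (cmod (vec2 k u v n))\<^sup>2) = (cmod u)\<^sup>2 + (cmod v)\<^sup>2"
  and vec2_summ: "summable (\<lambda>n. (cmod (vec2 k u v n))\<^sup>2)"
proof -
  have z: "n \<notin> {2*k, 2*k+1} \<Longrightarrow> (cmod (vec2 k u v n))\<^sup>2 = 0" for n by (simp add: vec2_def)
  show "(\<Sum>n. (cmod (vec2 k u v n))\<^sup>2) = (cmod u)\<^sup>2 + (cmod v)\<^sup>2"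
    by (subst suminf_finite[of "{2*k, 2*k+1}"]) (auto simp: z vec2_def)
  show "summable (\<lambda>n. (cmod (vec2 k u v n))\<^sup>2)"
    by (rule summable_finite[of "{2*k, 2*k+1}"]) (auto simp: z)
qed

lemma PP_vec2: "PP (vec2 k u v) = vec2 k 0 v"
  by (auto simp: PP_def vec2_def fun_eq_iff)

lemma witness:
  fixes k :: nat
  defines "d \<equiv> sqrt ((real k + 1)\<^sup>2 + 1)"
  defines "w \<equiv> vec2 k (of_real ((real k + 1) / d)) (of_real (1 / d))"
  shows "w \<in> MM" "l2_norm w = 1" "l2_norm (PP w) \<le> 1 / (real k + 1)"
proof -
  have dpos: "d > 0" unfolding d_def by (intro real_sqrt_gt_zero add_nonneg_pos) auto
  have d2: "d\<^sup>2 = (real k + 1)\<^sup>2 + 1" unfolding d_def by simp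
  have pos: "(real k+1)\<^sup>2+1 > 0" by (intro add_nonneg_pos) auto
  have "l2_norm w = sqrt (((real k + 1) / d)\<^sup>2 + (1/d)\<^sup>2)"
    unfolding l2_norm_def w_def vec2_sum norm_of_real power2_abs by (rule refl)
  also have "\<dots> = 1" using dpos d2 pos by (simp add: power_divide add_divide_distrib[symmetric])
  finally show "l2_norm w = 1" .
  have "l2_norm (PP w) = sqrt ((1/d)\<^sup>2)"
    unfolding l2_norm_def w_def PP_vec2 vec2_sum norm_of_real power2_abs by simp
  also have "\<dots> = 1 / d" using dpos by simp
  also have "\<dots> \<le> 1 / (real k + 1)"
  proof -
    have "real k + 1 \<le> d" unfolding d_def by (rule real_le_rsqrt) simp
    thus ?thesis by (simp add: frac_le)
  qed
  finally show "l2_norm (PP w) \<le> 1 / (real k + 1)" .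
  show "w \<in> MM" unfolding MM_def
  proof (intro CollectI conjI allI)
    show "w \<in> l2" unfolding l2_def w_def using vec2_summ by simp
    fix j show "w (2*j+1) = w (2*j) / of_nat (j+1)"
    proof (cases "j = k")
      case True
      have e1: "(of_nat (j+1)::complex) = of_real (real k + 1)" using True by simp
      have e2: "((real k + 1) / d) / (real k + 1) = 1 / d" by simp
      have a: "w (2*j+1) = of_real (1/d)" and b: "w (2*j) = of_real ((real k + 1) / d)"
        using True by (simp_all add: w_def vec2_def)
      have "w (2*j) / of_nat (j+1) = of_real ((real k + 1) / d) / of_real (real k + 1)"
        unfolding b e1 by (rule refl)
      also have "\<dots> = of_real (((real k + 1) / d) / (real k + 1))"
        by (rule of_real_divide[symmetric])
      also have "\<dots> = of_real (1/d)" using e2 by simp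
      finally show ?thesis using a by simp
    next
      case False
      hence "2*j+1 \<noteq> 2*k" "2*j \<noteq> 2*k+1" "2*j+1 \<noteq> 2*k+1" "2*j \<noteq> 2*k" by presburger+
      thus ?thesis by (simp add: w_def vec2_def)
    qed
  qed
qed

theorem lemma3p2:
  shows "\<exists>P. orth_proj P \<and> \<not> AN_star P"
proof (intro exI conjI)
  show "orth_proj PP" by (rule orth)
  define S where "S = {l2_norm (PP x) | x. x \<in> MM \<and> l2_norm x = 1}"
  have Sge: "0 \<le> t" if t: "t \<in> S" for t
  proof -
    from t obtain x where x: "t = l2_norm (PP x)" "x \<in> MM" unfolding S_def by blast
    hence "x \<in> l2" by (simp add: MM_def)
    thus ?thesis using x(1) l2_norm_nonneg PP_l2(1) by metis
  qed
  have bdd: "bdd_below S" by (rule bdd_belowI[of _ 0]) (rule Sge)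
  have wit: "\<exists>w. w \<in> MM \<and> l2_norm w = 1 \<and> l2_norm (PP w) \<le> 1 / (real k + 1)" for k
    using witness[of k] by blast
  have Sle: "Inf S \<le> 1 / (real k + 1)" for k
  proof -
    obtain w where w: "w \<in> MM" "l2_norm w = 1" "l2_norm (PP w) \<le> 1 / (real k + 1)"
      using wit by blast
    have "l2_norm (PP w) \<in> S" unfolding S_def using w(1,2) by blast
    from cInf_lower[OF this bdd] w(3) show ?thesis by linarith
  qed
  have Inf0: "Inf S \<le> 0"
  proof (rule ccontr)
    assume "\<not> Inf S \<le> 0"
    hence "0 < Inf S" by simp
    from reals_Archimedean[OF this] obtain k where "inverse (real (Suc k)) < Inf S" by blast
    with Sle[of k] show False by (simp add: inverse_eq_divide add.commute)
  qed
  have ne: "MM \<noteq> {\<lambda>n. 0}"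
  proof
    assume a: "MM = {\<lambda>n. 0}"
    obtain w where w: "w \<in> MM" "l2_norm w = 1" using wit by blast
    have "w = (\<lambda>n. 0)" using w(1) a by blast
    with w(2) show False by (simp add: l2_norm_def)
  qed
  show "\<not> AN_star PP"
    unfolding AN_star_def
  proof
    assume "\<forall>M. closed_subspace M \<and> M \<noteq> {\<lambda>n. 0} \<longrightarrow> N_star PP M"
    hence "N_star PP MM" using MM_closed ne by blast
    then obtain x0 where x0: "x0 \<in> MM" "l2_norm x0 = 1" "l2_norm (PP x0) = restr_inf PP MM"
      unfolding N_star_def by blast
    have rS: "restr_inf PP MM = Inf S" unfolding restr_inf_def S_def by (rule refl)
    have xl2: "x0 \<in> l2" using x0 by (simp add: MM_def)
    have "l2_norm (PP x0) = 0" using x0(3) rS Inf0 l2_norm_nonneg[OF PP_l2(1)[OF xl2]] by linarith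
    hence "(\<Sum>n. (cmod (PP x0 n))\<^sup>2) = 0" unfolding l2_norm_def by simp
    moreover have sm: "summable (\<lambda>n. (cmod (PP x0 n))\<^sup>2)" using PP_l2(1)[OF xl2] by (simp add: l2_def)
    ultimately have z: "\<forall>n. (cmod (PP x0 n))\<^sup>2 = 0"
      using suminf_eq_zero_iff[OF sm] by simp
    have odd0: "x0 (2*j+1) = 0" for j using z[rule_format, of "2*j+1"] by (simp add: PP_def)
    have "x0 n = 0" for n
    proof (cases "odd n")
      case True then obtain j where "n = 2*j+1" using oddE by blast
      thus ?thesis using odd0 by simp
    next
      case False then obtain j where n: "n = 2*j" by blast
      have mm: "x0 (2*j+1) = x0 (2*j) / of_nat (j+1)" using x0(1) by (simp add: MM_def)
      have nz: "(1 + of_nat j :: complex) \<noteq> 0"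
      proof -
        have "(1 + of_nat j :: complex) = of_nat (Suc j)" by (rule of_nat_Suc[symmetric])
        also have "\<dots> \<noteq> 0" by (simp only: of_nat_eq_0_iff)
        finally show ?thesis .
      qed
      with odd0[of j] mm show ?thesis by (simp add: n)
    qed
    hence "x0 = (\<lambda>n. 0)" by (rule ext)
    with x0(2) show False by (simp add: l2_norm_def)
  qed
qed

end
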